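(* Let $\mathcal{X}$ be a Polish space, $J:\mathcal{X}\to[0,+\infty]$ lower semicontinuous, and $Q\in\mathcal{P}(\mathcal{X})$. Then $$\sup_{f\in C_b(\mathcal{X})}\Big\{\int f\,dQ-\sup_{x\in\mathcal{X}}(f(x)-J(x))\Big\}=\int J\,dQ.$$ More generally, if $(\mathcal{X}_n^Q)_{n\ge1}$ is an increasing sequence of closed subsets of $\mathcal{X}$ with $\lim_nQ(\mathcal{X}_n^Q)=1$ and $\mathcal{G}_Q=\bigcup_{n\ge1}\mathcal{C}(\mathcal{X}_n^Q)$, where $\mathcal{C}(\mathcal{X}_o)=\{\mathbf{1}_{\mathcal{X}_o}\tilde f:\tilde f\in C_b(\mathcal{X})\}$, then the same identity holds with $C_b(\mathcal{X})$ replaced by $\mathcal{G}_Q$.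
   Context: $C_b(\mathcal{X})$: bounded continuous real functions; $\mathbf{1}_{\mathcal{X}_o}$ the indicator function of $\mathcal{X}_o$. *)

theory Defs
  imports "HOL-Analysis.Analysis" "HOL-Probability.Probability"
begin

definition lsc :: "('a::topological_space \<Rightarrow> ennreal) \<Rightarrow> bool" where
  "lsc J \<longleftrightarrow> (\<forall>c. closed {x. J x \<le> c})"

definition Cb :: "('a::topological_space \<Rightarrow> real) set" where
  "Cb = {f. continuous_on UNIV f \<and> bounded (range f)}"

definition restrC :: "'a::topological_space set \<Rightarrow> ('a \<Rightarrow> real) set" where
  "restrC Xo = {(\<lambda>x. indicator Xo x * g x) | g. g \<in> Cb}"

definition GQ :: "(nat \<Rightarrow> 'a::topological_space set) \<Rightarrow> ('a \<Rightarrow> real) set" where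
  "GQ Xs = (\<Union>n. restrC (Xs n))"

end

theory Submission
  imports Defs
begin

lemma lsc_approx:
  fixes J :: "'a::metric_space \<Rightarrow> ennreal"
  assumes "lsc J"
  obtains g :: "nat \<Rightarrow> 'a \<Rightarrow> real" where "\<And>k. g k \<in> Cb" "\<And>k x. 0 \<le> g k x"
    "\<And>k x. g k x \<le> real k" "\<And>k x. ennreal (g k x) \<le> J x"
    "\<And>k x. g k x \<le> g (Suc k) x" "\<And>x. (SUP k. ennreal (g k x)) = J x"
proof -
  define h where "h k y = enn2real (min (J y) (of_nat k))" for k :: nat and y
  have hnn: "0 \<le> h k y" for k y by (simp add: h_def)
  have hen: "ennreal (h k y) = min (J y) (of_nat k)" for k y
  proof -
    have "min (J y) (of_nat k) \<noteq> top" 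
    proof -
      have "min (J y) (of_nat k) \<le> of_nat k" by simp
      moreover have "(of_nat k :: ennreal) < top" by (rule of_nat_less_top)
      ultimately have "min (J y) (of_nat k) < top" by (rule order_le_less_trans)
      then show ?thesis by simp
    qed
    then show ?thesis unfolding h_def by (simp add: ennreal_enn2real_if)
  qed
  have hk: "h k y \<le> real k" for k y
  proof -
    have "ennreal (h k y) \<le> ennreal (real k)" unfolding hen
      by (simp add: ennreal_of_nat_eq_real_of_nat)
    then show ?thesis by (simp add: ennreal_le_iff)
  qed
  have hJ: "ennreal (h k y) \<le> J y" for k y unfolding hen by simp
  have hmono: "h k y \<le> h (Suc k) y" for k y
  proof -
    have "ennreal (h k y) \<le> ennreal (h (Suc k) y)" unfolding hen
      by (intro min.mono) auto
    then show ?thesis using hnn by (simp add: ennreal_le_iff)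
  qed
  define g where "g k x = (INF y. h k y + real k * dist x y)" for k x
  have bdd: "bdd_below (range (\<lambda>y. h k y + real k * dist x y))" for k x
    by (rule bdd_belowI[of _ 0]) (use hnn in auto)
  have glow: "g k x \<le> h k y + real k * dist x y" for k x y
    unfolding g_def by (rule cINF_lower[OF bdd]) simp
  have gnn: "0 \<le> g k x" for k x
    unfolding g_def by (rule cINF_greatest) (auto intro!: add_nonneg_nonneg hnn)
  have gh: "g k x \<le> h k x" for k x using glow[of k x x] by simp
  have glip: "g k x \<le> g k x' + real k * dist x x'" for k x x'
  proof -
    have "g k x - real k * dist x x' \<le> g k x'"
      unfolding g_def[of k x']
    proof (rule cINF_greatest)
      fix y
      have "dist x y \<le> dist x x' + dist x' y" by (rule dist_triangle)
      then have "real k * dist x y \<le> real k * (dist x x' + dist x' y)"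
        by (rule mult_left_mono) simp
      then have "real k * dist x y \<le> real k * dist x x' + real k * dist x' y"
        by (simp add: distrib_left)
      then show "g k x - real k * dist x x' \<le> h k y + real k * dist x' y"
        using glow[of k x y] by linarith
    qed simp
    then show ?thesis by linarith
  qed
  have gcb: "g k \<in> Cb" for k
  proof -
    have "(real k)-lipschitz_on UNIV (g k)"
      unfolding lipschitz_on_def
    proof (intro conjI ballI)
      fix x y
      show "dist (g k x) (g k y) \<le> real k * dist x y"
        using glip[of k x y] glip[of k y x] by (simp add: dist_real_def dist_commute abs_le_iff)
    qed simp
    then have "continuous_on UNIV (g k)" by (rule lipschitz_on_continuous_on)
    moreover have "bounded (range (g k))"
      unfolding bounded_iff
    proof (intro exI ballI)
      fix u assume "u \<in> range (g k)"
      then obtain x where "u = g k x" by auto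
      then show "norm u \<le> real k" using gnn[of k x] gh[of k x] hk[of k x] by simp
    qed
    ultimately show ?thesis unfolding Cb_def by simp
  qed
  have gk: "g k x \<le> real k" for k x using gh[of k x] hk[of k x] by linarith
  have gJ: "ennreal (g k x) \<le> J x" for k x
    using gh[of k x] hJ[of k x] by (meson ennreal_leI order_trans)
  have gmono: "g k x \<le> g (Suc k) x" for k x
    unfolding g_def[of "Suc k" x]
  proof (rule cINF_greatest)
    fix y
    have "real k * dist x y \<le> real (Suc k) * dist x y" by (simp add: mult_right_mono)
    then show "g k x \<le> h (Suc k) y + real (Suc k) * dist x y"
      using glow[of k x y] hmono[of k y] by linarith
  qed simp
  have gsup: "(SUP k. ennreal (g k x)) = J x" for x
  proof (rule antisym)
    show "(SUP k. ennreal (g k x)) \<le> J x"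
      by (rule SUP_least) (use gJ in auto)
    show "J x \<le> (SUP k. ennreal (g k x))"
    proof (rule dense_le)
      fix y assume y: "y < J x"
      then have "y \<noteq> top" by auto
      define c where "c = enn2real y"
      have c0: "0 \<le> c" by (simp add: c_def)
      have yc: "y = ennreal c" using \<open>y \<noteq> top\<close> by (simp add: c_def ennreal_enn2real_if)
      have "closed {z. J z \<le> ennreal c}" using assms unfolding lsc_def by blast
      then have "open (- {z. J z \<le> ennreal c})" by auto
      moreover have "x \<in> - {z. J z \<le> ennreal c}" using y yc by auto
      ultimately obtain r where r: "r > 0" "ball x r \<subseteq> - {z. J z \<le> ennreal c}"
        unfolding open_contains_ball by blast
      obtain k :: nat where k: "c + c / r \<le> real k" using real_arch_simple by blast
      have kc: "c \<le> real k" proof - have "0 \<le> c / r" using c0 r by simp then show ?thesis using k by linarith qed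
      have kr: "c \<le> real k * r"
      proof -
        have "c / r \<le> real k" using k c0 by linarith
        then have "c / r * r \<le> real k * r" by (rule mult_right_mono) (use r in auto)
        then show ?thesis using r by simp
      qed
      have "c \<le> g k x" unfolding g_def
      proof (rule cINF_greatest)
        fix z
        show "c \<le> h k z + real k * dist x z"
        proof (cases "dist x z < r")
          case True
          then have "z \<in> ball x r" by simp
          then have "ennreal c < J z" using r by auto
          moreover have "ennreal c \<le> of_nat k"
            using kc by (simp add: ennreal_of_nat_eq_real_of_nat ennreal_leI)
          ultimately have "ennreal c \<le> ennreal (h k z)" unfolding hen by simp
          then have "c \<le> h k z" using hnn by (simp add: ennreal_le_iff)
          then show ?thesis by (simp add: add_increasing2)
        next
          case False
          then have "real k * r \<le> real k * dist x z" by (simp add: mult_left_mono)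
          then show ?thesis using kr hnn[of k z] by linarith
        qed
      qed simp
      then have "y \<le> ennreal (g k x)" using yc by (simp add: ennreal_leI)
      also have "\<dots> \<le> (SUP k. ennreal (g k x))" by (rule SUP_upper) simp
      finally show "y \<le> (SUP k. ennreal (g k x))" .
    qed
  qed
  show ?thesis by (rule that[OF gcb gnn gk gJ gmono gsup])
qed


lemma upper_bound:
  fixes J :: "'a::topological_space \<Rightarrow> ennreal" and Q :: "'a measure" and f :: "'a \<Rightarrow> real"
  assumes Q: "prob_space Q" and fm: "f \<in> borel_measurable Q" and B: "\<And>x. \<bar>f x\<bar> \<le> B"
  shows "ereal (integral\<^sup>L Q f) - (SUP x. ereal (f x) - enn2ereal (J x)) \<le> enn2ereal (\<integral>\<^sup>+ x. J x \<partial>Q)"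
proof -
  interpret prob_space Q by (rule Q)
  define S where "S = (SUP x. ereal (f x) - enn2ereal (J x))"
  have Sx: "ereal (f x) - enn2ereal (J x) \<le> S" for x unfolding S_def by (rule SUP_upper) simp
  have intf: "integrable Q f"
    by (rule integrable_const_bound[where B=B]) (use B fm in auto)
  have "ereal (integral\<^sup>L Q f) - S \<le> enn2ereal (\<integral>\<^sup>+ x. J x \<partial>Q)"
  proof (cases "(\<integral>\<^sup>+ x. J x \<partial>Q) = top")
    case True then show ?thesis by simp
  next
    case False
    then obtain r where r: "0 \<le> r" "(\<integral>\<^sup>+ x. J x \<partial>Q) = ennreal r"
      by (cases "(\<integral>\<^sup>+ x. J x \<partial>Q)" rule: ennreal_cases) auto
    show ?thesis
    proof (cases S)
      case (real s)
      note Ss = this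
      have pw: "ennreal (f x - s) \<le> J x" for x
      proof (cases "J x" rule: ennreal_cases)
        case (real j)
        then have "ereal (f x) - ereal j \<le> ereal s" using Sx[of x] real Ss by simp
        then have "f x - s \<le> j" by simp
        then show ?thesis using real by (simp add: ennreal_leI)
      qed simp
      have "(\<integral>\<^sup>+ x. ennreal (f x - s) \<partial>Q) \<le> (\<integral>\<^sup>+ x. J x \<partial>Q)"
        by (rule nn_integral_mono) (rule pw)
      then have "integral\<^sup>L Q (\<lambda>x. f x - s) \<le> r"
        using r by (intro integral_real_bounded) auto
      moreover have "integral\<^sup>L Q (\<lambda>x. f x - s) = integral\<^sup>L Q f - s"
        using intf by (simp add: prob_space)
      ultimately show ?thesis using r Ss by simp
    next
      case PInf then show ?thesis by simp
    next
      case MInf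
      have "J x = top" for x
      proof -
        have "ereal (f x) - enn2ereal (J x) = - \<infinity>" using Sx[of x] MInf by simp
        then show ?thesis
          by (cases "J x" rule: ennreal_cases) auto
      qed
      then have "(\<integral>\<^sup>+ x. J x \<partial>Q) = top" by (simp add: emeasure_space_1)
      then show ?thesis using False by simp
    qed
  qed
  then show ?thesis by (simp add: S_def)
qed

lemma lower_bound:
  fixes J :: "'a::topological_space \<Rightarrow> ennreal" and Q :: "'a measure" and g :: "nat \<Rightarrow> 'a \<Rightarrow> real"
  assumes Q: "prob_space Q" and sQ: "sets Q = sets borel"
    and gcb: "\<And>k. g k \<in> Cb" and gnn: "\<And>k x. 0 \<le> g k x"
    and gmono: "\<And>k x. g k x \<le> g (Suc k) x" and gsup: "\<And>x. (SUP k. ennreal (g k x)) = J x"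
    and M: "\<And>k. ereal (integral\<^sup>L Q (g k)) \<le> M"
  shows "enn2ereal (\<integral>\<^sup>+ x. J x \<partial>Q) \<le> M"
proof -
  interpret prob_space Q by (rule Q)
  have meas: "g k \<in> borel_measurable Q" for k
  proof -
    have "continuous_on UNIV (g k)" using gcb[of k] by (simp add: Cb_def)
    then have "g k \<in> borel_measurable borel" by (rule borel_measurable_continuous_onI)
    then show ?thesis by (simp add: measurable_cong_sets[OF sQ refl])
  qed
  have intg: "integrable Q (g k)" for k
  proof -
    obtain b where b: "\<forall>y\<in>range (g k). norm y \<le> b" using gcb[of k] by (auto simp: Cb_def bounded_iff)
    show ?thesis by (rule integrable_const_bound[where B=b]) (use b meas in auto)
  qed
  have "(\<integral>\<^sup>+ x. J x \<partial>Q) = (\<integral>\<^sup>+ x. (SUP k. ennreal (g k x)) \<partial>Q)" by (simp add: gsup)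
  also have "\<dots> = (SUP k. \<integral>\<^sup>+ x. ennreal (g k x) \<partial>Q)"
  proof (rule nn_integral_monotone_convergence_SUP)
    show "incseq (\<lambda>k x. ennreal (g k x))"
      by (rule incseq_SucI) (simp add: le_fun_def gmono ennreal_leI)
  qed (use meas in auto)
  also have "\<dots> = (SUP k. ennreal (integral\<^sup>L Q (g k)))"
    by (intro SUP_cong refl nn_integral_eq_integral intg) (auto simp: gnn)
  finally have eq: "(\<integral>\<^sup>+ x. J x \<partial>Q) = (SUP k. ennreal (integral\<^sup>L Q (g k)))" .
  have inn: "0 \<le> integral\<^sup>L Q (g k)" for k by (rule integral_nonneg_AE) (simp add: gnn)
  have M0: "0 \<le> M" using M[of 0] inn[of 0] by (metis ereal_less_eq(3) order_trans zero_ereal_def)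
  have "enn2ereal (SUP k. ennreal (integral\<^sup>L Q (g k))) = sup 0 (SUP k. enn2ereal (ennreal (integral\<^sup>L Q (g k))))"
    by (simp add: Sup_ennreal.rep_eq image_image)
  also have "\<dots> \<le> M"
    using M M0 inn by (auto intro!: SUP_least simp: enn2ereal_ennreal)
  finally show ?thesis using eq by simp
qed


lemma S_le_0:
  fixes J :: "'a \<Rightarrow> ennreal" and f :: "'a \<Rightarrow> real"
  assumes "\<And>x. ereal (f x) \<le> enn2ereal (J x)"
  shows "(SUP x. ereal (f x) - enn2ereal (J x)) \<le> 0"
proof (rule SUP_least)
  fix x
  show "ereal (f x) - enn2ereal (J x) \<le> 0"
  proof (cases "J x" rule: ennreal_cases)
    case (real j)
    then show ?thesis using assms[of x] by (simp add: enn2ereal_ennreal)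
  qed simp
qed

lemma minus_S_ge:
  fixes a :: real and S :: ereal
  assumes "S \<le> 0"
  shows "ereal a \<le> ereal a - S"
  using ereal_minus_mono[of "ereal a" "ereal a" S 0] assms by simp

theorem mainTheorem12:
  fixes J :: "'a::polish_space \<Rightarrow> ennreal" and Q :: "'a measure"
  assumes "lsc J" and "prob_space Q" and "sets Q = sets borel"
  shows "(SUP f\<in>Cb. ereal (integral\<^sup>L Q f) - (SUP x. ereal (f x) - enn2ereal (J x)))
           = enn2ereal (\<integral>\<^sup>+ x. J x \<partial>Q)
    \<and> (\<forall>Xs :: nat \<Rightarrow> 'a set. (\<forall>n. closed (Xs n)) \<and> incseq Xs
           \<and> (\<lambda>n. measure Q (Xs n)) \<longlonglongrightarrow> 1 \<longrightarrow>
         (SUP f\<in>GQ Xs. ereal (integral\<^sup>L Q f) - (SUP x. ereal (f x) - enn2ereal (J x)))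
           = enn2ereal (\<integral>\<^sup>+ x. J x \<partial>Q))"
proof -
  interpret prob_space Q by (rule assms(2))
  note sQ = assms(3)
  obtain g :: "nat \<Rightarrow> 'a \<Rightarrow> real" where gcb: "\<And>k. g k \<in> Cb" and gnn: "\<And>k x. 0 \<le> g k x"
    and gk: "\<And>k x. g k x \<le> real k" and gJ: "\<And>k x. ennreal (g k x) \<le> J x"
    and gmono: "\<And>k x. g k x \<le> g (Suc k) x" and gsup: "\<And>x. (SUP k. ennreal (g k x)) = J x"
    using lsc_approx[OF assms(1)] by blast
  have gJe: "ereal (g k x) \<le> enn2ereal (J x)" for k x
  proof -
    have "enn2ereal (ennreal (g k x)) \<le> enn2ereal (J x)"
      using gJ[of k x] by (simp add: less_eq_ennreal.rep_eq)
    then show ?thesis using gnn[of k x] by (simp add: enn2ereal_ennreal)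
  qed
  have cbmeas: "f \<in> borel_measurable Q" if "f \<in> Cb" for f
  proof -
    have "continuous_on UNIV f" using that by (simp add: Cb_def)
    then have "f \<in> borel_measurable borel" by (rule borel_measurable_continuous_onI)
    then show ?thesis by (simp add: measurable_cong_sets[OF sQ refl])
  qed
  have cbbound: "\<exists>b. \<forall>x. \<bar>f x\<bar> \<le> b" if "f \<in> Cb" for f
  proof -
    have "bounded (range f)" using that by (simp add: Cb_def)
    then obtain b where "\<forall>y\<in>range f. norm y \<le> b" unfolding bounded_iff by blast
    then show ?thesis by auto
  qed
  have gint: "integrable Q (g k)" for k
  proof -
    obtain b where "\<forall>x. \<bar>g k x\<bar> \<le> b" using cbbound[OF gcb[of k]] by blast
    then show ?thesis
      by (intro integrable_const_bound[where B=b]) (auto simp: cbmeas[OF gcb])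
  qed
  have part1: "(SUP f\<in>Cb. ereal (integral\<^sup>L Q f) - (SUP x. ereal (f x) - enn2ereal (J x)))
           = enn2ereal (\<integral>\<^sup>+ x. J x \<partial>Q)"
  proof (rule antisym)
    show "(SUP f\<in>Cb. ereal (integral\<^sup>L Q f) - (SUP x. ereal (f x) - enn2ereal (J x)))
           \<le> enn2ereal (\<integral>\<^sup>+ x. J x \<partial>Q)"
    proof (rule SUP_least)
      fix f :: "'a \<Rightarrow> real" assume f: "f \<in> Cb"
      obtain b where "\<forall>x. \<bar>f x\<bar> \<le> b" using cbbound[OF f] by blast
      then show "ereal (integral\<^sup>L Q f) - (SUP x. ereal (f x) - enn2ereal (J x))
           \<le> enn2ereal (\<integral>\<^sup>+ x. J x \<partial>Q)"
        by (intro upper_bound[where B=b] assms(2) cbmeas[OF f]) auto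
    qed
    show "enn2ereal (\<integral>\<^sup>+ x. J x \<partial>Q) \<le>
      (SUP f\<in>Cb. ereal (integral\<^sup>L Q f) - (SUP x. ereal (f x) - enn2ereal (J x)))"
    proof (rule lower_bound[OF assms(2) sQ gcb gnn gmono gsup])
      fix k
      have "ereal (integral\<^sup>L Q (g k)) \<le> ereal (integral\<^sup>L Q (g k)) - (SUP x. ereal (g k x) - enn2ereal (J x))"
        by (rule minus_S_ge) (rule S_le_0[OF gJe])
      also have "\<dots> \<le> (SUP f\<in>Cb. ereal (integral\<^sup>L Q f) - (SUP x. ereal (f x) - enn2ereal (J x)))"
        by (rule SUP_upper) (rule gcb)
      finally show "ereal (integral\<^sup>L Q (g k)) \<le> (SUP f\<in>Cb. ereal (integral\<^sup>L Q f) - (SUP x. ereal (f x) - enn2ereal (J x)))" .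
    qed
  qed
  have part2: "(SUP f\<in>GQ Xs. ereal (integral\<^sup>L Q f) - (SUP x. ereal (f x) - enn2ereal (J x)))
           = enn2ereal (\<integral>\<^sup>+ x. J x \<partial>Q)"
    if cl: "\<forall>n. closed (Xs n)" and lim: "(\<lambda>n. measure Q (Xs n)) \<longlonglongrightarrow> 1" for Xs :: "nat \<Rightarrow> 'a set"
  proof -
    have Xsets: "Xs n \<in> sets Q" for n using cl sQ by auto
    have indmeas: "(\<lambda>x. indicator (Xs n) x * f x) \<in> borel_measurable Q" if "f \<in> Cb" for n f
      using Xsets[of n] cbmeas[OF that] by (intro borel_measurable_times borel_measurable_indicator) auto
    have indbound: "\<exists>b. \<forall>x. \<bar>indicator (Xs n) x * f x\<bar> \<le> b" if hf: "f \<in> Cb" for n f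
    proof -
      obtain b where b: "\<forall>x. \<bar>f x\<bar> \<le> b" using cbbound[OF hf] by blast
      have "\<bar>indicator (Xs n) x * f x\<bar> \<le> b" for x
        using b[rule_format, of x] by (cases "x \<in> Xs n") (auto simp: indicator_def)
      then show ?thesis by blast
    qed
    define M where "M = (SUP f\<in>GQ Xs. ereal (integral\<^sup>L Q f) - (SUP x. ereal (f x) - enn2ereal (J x)))"
    have "M \<le> enn2ereal (\<integral>\<^sup>+ x. J x \<partial>Q)"
      unfolding M_def
    proof (rule SUP_least)
      fix f :: "'a \<Rightarrow> real" assume "f \<in> GQ Xs"
      then obtain n h where h: "h \<in> Cb" and fh: "f = (\<lambda>x. indicator (Xs n) x * h x)"
        unfolding GQ_def restrC_def by blast
      obtain b where "\<forall>x. \<bar>f x\<bar> \<le> b" using indbound[OF h, of n] fh by blast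
      then show "ereal (integral\<^sup>L Q f) - (SUP x. ereal (f x) - enn2ereal (J x))
           \<le> enn2ereal (\<integral>\<^sup>+ x. J x \<partial>Q)"
        using indmeas[OF h, of n] fh by (intro upper_bound[where B=b] assms(2)) auto
    qed
    moreover have "enn2ereal (\<integral>\<^sup>+ x. J x \<partial>Q) \<le> M"
    proof (rule lower_bound[OF assms(2) sQ gcb gnn gmono gsup])
      fix k
      define F where "F n x = indicator (Xs n) x * g k x" for n x
      have Fint: "integrable Q (F n)" for n
      proof -
        obtain b where "\<forall>x. \<bar>F n x\<bar> \<le> b" using indbound[OF gcb[of k], of n] unfolding F_def by blast
        then show ?thesis
          using indmeas[OF gcb[of k], of n] unfolding F_def[abs_def]
          by (intro integrable_const_bound[where B=b]) auto
      qed
      have Fle: "ereal (F n x) \<le> enn2ereal (J x)" for n x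
      proof -
        have "F n x \<le> g k x" using gnn[of k x] by (cases "x \<in> Xs n") (auto simp: F_def)
        then show ?thesis using gJe[of k x] by (meson ereal_less_eq(3) order_trans)
      qed
      have FGQ: "F n \<in> GQ Xs" for n
        unfolding GQ_def restrC_def F_def[abs_def] using gcb[of k] by blast
      have bnd: "ereal (integral\<^sup>L Q (g k) - real k * (1 - measure Q (Xs n))) \<le> M" for n
      proof -
        have pw: "g k x - F n x \<le> real k - real k * indicator (Xs n) x" for x
          using gk[of k x] by (cases "x \<in> Xs n") (auto simp: F_def)
        have "integral\<^sup>L Q (\<lambda>x. g k x - F n x) \<le> integral\<^sup>L Q (\<lambda>x. real k - real k * indicator (Xs n) x)"
        proof (rule integral_mono)
          have "integrable Q (indicator (Xs n) :: 'a \<Rightarrow> real)"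
            using Xsets[of n] by (intro integrable_real_indicator) (auto simp: emeasure_eq_measure)
          then show "integrable Q (\<lambda>x. real k - real k * indicator (Xs n) x)"
            by (intro Bochner_Integration.integrable_diff integrable_mult_right) auto
        qed (use pw gint Fint in auto)
        moreover have "integral\<^sup>L Q (\<lambda>x. g k x - F n x) = integral\<^sup>L Q (g k) - integral\<^sup>L Q (F n)"
          using gint Fint by (rule Bochner_Integration.integral_diff)
        moreover have "integral\<^sup>L Q (\<lambda>x. real k - real k * indicator (Xs n) x) = real k - real k * measure Q (Xs n)"
        proof -
          have ii: "integrable Q (indicator (Xs n) :: 'a \<Rightarrow> real)"
            using Xsets[of n] by (intro integrable_real_indicator) (auto simp: emeasure_eq_measure)
          have "integral\<^sup>L Q (\<lambda>x. real k - real k * indicator (Xs n) x)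
              = integral\<^sup>L Q (\<lambda>x. real k) - integral\<^sup>L Q (\<lambda>x. real k * indicator (Xs n) x)"
            by (rule Bochner_Integration.integral_diff) (use ii in auto)
          also have "\<dots> = real k - real k * measure Q (Xs n)"
            using Xsets[of n] by (simp add: prob_space Int_absorb2 sets.sets_into_space)
          finally show ?thesis .
        qed
        ultimately have "integral\<^sup>L Q (g k) - real k * (1 - measure Q (Xs n)) \<le> integral\<^sup>L Q (F n)"
          by (simp add: algebra_simps)
        then have "ereal (integral\<^sup>L Q (g k) - real k * (1 - measure Q (Xs n))) \<le> ereal (integral\<^sup>L Q (F n))"
          by simp
        also have "\<dots> \<le> ereal (integral\<^sup>L Q (F n)) - (SUP x. ereal (F n x) - enn2ereal (J x))"
          by (rule minus_S_ge) (rule S_le_0[OF Fle])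
        also have "\<dots> \<le> M" unfolding M_def by (rule SUP_upper) (rule FGQ)
        finally show ?thesis .
      qed
      have "(\<lambda>n. integral\<^sup>L Q (g k) - real k * (1 - measure Q (Xs n)))
              \<longlonglongrightarrow> integral\<^sup>L Q (g k) - real k * (1 - 1)"
        by (intro tendsto_intros lim)
      then have "(\<lambda>n. ereal (integral\<^sup>L Q (g k) - real k * (1 - measure Q (Xs n))))
              \<longlonglongrightarrow> ereal (integral\<^sup>L Q (g k))"
        by (intro tendsto_ereal) simp
      then show "ereal (integral\<^sup>L Q (g k)) \<le> M"
        by (rule LIMSEQ_le_const2) (use bnd in blast)
    qed
    ultimately show ?thesis unfolding M_def by (rule antisym)
  qed
  show ?thesis using part1 part2 by blast
qed

end
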